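(* Let $P\in\mathbb{R}^{m\times m}$ be symmetric, stochastic and positive semidefinite, let $\mathcal{X}\subseteq\mathbb{R}^n$ be a closed convex set, let $p\ge1$ and $\sigma=\min\{1,n^{\frac2p-1}\}$. Then for all $\bm{u}=[u_1^\top,\dots,u_m^\top]^\top$ and $\bm{v}=[v_1^\top,\dots,v_m^\top]^\top$ in $\mathcal{X}^m$, $$\big\|((I_m-P)\otimes I_n)\bm{u}\big\|_2^2\le\frac1\sigma\sum_{i,j=1}^mP_{ij}\|v_i-u_j\|_p^2.$$
   Context: $\otimes$ denotes the Kronecker product, $I_k$ the $k\times k$ identity, $\|\cdot\|_p$ the $\ell_p$-norm. Stochastic means nonnegative entries with row sums 1. *)

theory Defs
  imports "HOL-Analysis.Analysis"
begin

definition stochastic :: "real^'m^'m \<Rightarrow> bool" where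
  "stochastic P \<longleftrightarrow> (\<forall>i j. P$i$j \<ge> 0) \<and> (\<forall>i. (\<Sum>j\<in>UNIV. P$i$j) = 1)"

definition psd :: "real^'m^'m \<Rightarrow> bool" where
  "psd P \<longleftrightarrow> (\<forall>x. x \<bullet> (P *v x) \<ge> 0)"

definition kron :: "real^'b^('a::finite) \<Rightarrow> real^'d^('c::finite) \<Rightarrow> real^('b \<times> 'd)^('a \<times> 'c)" where
  "kron A B = (\<chi> r. \<chi> c. A$(fst r)$(fst c) * B$(snd r)$(snd c))"

definition stack :: "('m::finite \<Rightarrow> real^'n) \<Rightarrow> real^('m \<times> 'n)" where
  "stack u = (\<chi> r. u (fst r) $ (snd r))"

definition lpnorm :: "real \<Rightarrow> real^'n \<Rightarrow> real" where
  "lpnorm p x = (\<Sum>k\<in>UNIV. \<bar>x$k\<bar> powr p) powr (1/p)"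

end

theory Submission
  imports Defs
begin


lemma colsum:
  fixes P :: "real^'m^'m"
  assumes "transpose P = P" "stochastic P"
  shows "(\<Sum>i\<in>UNIV. P$i$j) = 1"
proof -
  have "P$i$j = P$j$i" for i j using assms(1) by (metis transpose_def vec_lambda_beta)
  then have "(\<Sum>i\<in>UNIV. P$i$j) = (\<Sum>i\<in>UNIV. P$j$i)" by simp
  then show ?thesis using assms(2) unfolding stochastic_def by simp
qed

lemma quad_ge:
  fixes P :: "real^'m^'m" and z :: "real^'m"
  assumes "transpose P = P" "stochastic P"
  shows "z \<bullet> (P *v z) \<le> z \<bullet> z"
proof -
  have nn: "P$i$j \<ge> 0" for i j using assms(2) unfolding stochastic_def by auto
  have rs: "(\<Sum>j\<in>UNIV. P$i$j) = 1" for i using assms(2) unfolding stochastic_def by auto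
  have cs: "(\<Sum>i\<in>UNIV. P$i$j) = 1" for j using colsum[OF assms] .
  have "0 \<le> (\<Sum>i\<in>UNIV. \<Sum>j\<in>UNIV. P$i$j * (z$i - z$j)^2)"
    by (intro sum_nonneg mult_nonneg_nonneg nn) auto
  also have "\<dots> = (\<Sum>i\<in>UNIV. \<Sum>j\<in>UNIV. P$i$j * z$i^2) + (\<Sum>i\<in>UNIV. \<Sum>j\<in>UNIV. P$i$j * z$j^2)
      - 2 * (\<Sum>i\<in>UNIV. \<Sum>j\<in>UNIV. P$i$j * z$i * z$j)"
    by (simp add: power2_diff algebra_simps sum.distrib sum_subtractf sum_distrib_left)
  also have "(\<Sum>i\<in>UNIV. \<Sum>j\<in>UNIV. P$i$j * z$i^2) = z \<bullet> z"
    by (simp add: inner_vec_def sum_distrib_right[symmetric] rs power2_eq_square)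
  also have "(\<Sum>i\<in>UNIV. \<Sum>j\<in>UNIV. P$i$j * z$j^2) = z \<bullet> z"
    by (subst sum.swap) (simp add: inner_vec_def sum_distrib_right[symmetric] cs power2_eq_square)
  also have "(\<Sum>i\<in>UNIV. \<Sum>j\<in>UNIV. P$i$j * z$i * z$j) = z \<bullet> (P *v z)"
    by (simp add: inner_vec_def matrix_vector_mult_def sum_distrib_left algebra_simps)
  finally show ?thesis by simp
qed

lemma symm_inner:
  fixes P :: "real^'m^'m"
  assumes "transpose P = P"
  shows "x \<bullet> (P *v y) = (P *v x) \<bullet> y"
  by (metis assms dot_lmul_matrix inner_commute transpose_matrix_vector)

lemma key_quad:
  fixes P :: "real^'m^'m" and x :: "real^'m"
  assumes "transpose P = P" "stochastic P" "psd P"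
  shows "(P *v x) \<bullet> (P *v x) \<le> x \<bullet> (P *v x)"
proof -
  define y where "y = x - P *v x"
  define z where "z = P *v x"
  have e: "x \<bullet> (P *v x) - z \<bullet> z = y \<bullet> (P *v y) + (z \<bullet> z - z \<bullet> (P *v z))"
    unfolding y_def z_def
    using symm_inner[OF assms(1), of x "P *v x"] symm_inner[OF assms(1), of "P *v x" x]
    by (simp add: matrix_vector_right_distrib matrix_vector_mult_diff_distrib inner_diff_left inner_diff_right inner_commute)
  have "0 \<le> y \<bullet> (P *v y)" using assms(3) psd_def by blast
  moreover have "0 \<le> z \<bullet> z - z \<bullet> (P *v z)" using quad_ge[OF assms(1,2)] by simp
  ultimately show ?thesis using e unfolding z_def by linarith
qed

lemma scalar_ineq:
  fixes P :: "real^'m^'m" and a b :: "real^'m"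
  assumes "transpose P = P" "stochastic P" "psd P"
  shows "(\<Sum>i\<in>UNIV. (a$i - (P *v a)$i)^2) \<le> (\<Sum>i\<in>UNIV. \<Sum>j\<in>UNIV. P$i$j * (b$i - a$j)^2)"
proof -
  have rs: "(\<Sum>j\<in>UNIV. P$i$j) = 1" for i using assms(2) unfolding stochastic_def by auto
  have cs: "(\<Sum>i\<in>UNIV. P$i$j) = 1" for j using colsum[OF assms(1,2)] .
  have A: "(\<Sum>j\<in>UNIV. P$i$j * (b$i - a$j)^2) = (b$i - (P *v a)$i)^2 + (\<Sum>j\<in>UNIV. P$i$j * a$j^2) - ((P *v a)$i)^2" for i
  proof -
    have "(\<Sum>j\<in>UNIV. P$i$j * (b$i - a$j)^2) = (\<Sum>j\<in>UNIV. P$i$j) * b$i^2 - 2 * b$i * (\<Sum>j\<in>UNIV. P$i$j * a$j) + (\<Sum>j\<in>UNIV. P$i$j * a$j^2)"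
      by (simp add: power2_diff algebra_simps sum.distrib sum_subtractf sum_distrib_left sum_distrib_right)
    then show ?thesis by (simp add: rs matrix_vector_mult_def power2_diff)
  qed
  have B: "(\<Sum>i\<in>UNIV. \<Sum>j\<in>UNIV. P$i$j * a$j^2) = a \<bullet> a"
    by (subst sum.swap) (simp add: inner_vec_def sum_distrib_right[symmetric] cs power2_eq_square)
  have "(\<Sum>i\<in>UNIV. \<Sum>j\<in>UNIV. P$i$j * (b$i - a$j)^2) = (\<Sum>i\<in>UNIV. (b$i - (P *v a)$i)^2) + a \<bullet> a - (P *v a) \<bullet> (P *v a)"
  proof -
    have "(\<Sum>i\<in>UNIV. \<Sum>j\<in>UNIV. P$i$j * (b$i - a$j)^2) = (\<Sum>i\<in>UNIV. (b$i - (P *v a)$i)^2 + (\<Sum>j\<in>UNIV. P$i$j * a$j^2) - ((P *v a)$i)^2)"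
      by (simp only: A)
    also have "\<dots> = (\<Sum>i\<in>UNIV. (b$i - (P *v a)$i)^2) + (\<Sum>i\<in>UNIV. \<Sum>j\<in>UNIV. P$i$j * a$j^2) - (\<Sum>i\<in>UNIV. ((P *v a)$i)^2)"
      by (simp add: sum.distrib sum_subtractf)
    also have "\<dots> = (\<Sum>i\<in>UNIV. (b$i - (P *v a)$i)^2) + a \<bullet> a - (P *v a) \<bullet> (P *v a)"
      by (simp only: B) (simp add: inner_vec_def power2_eq_square)
    finally show ?thesis .
  qed
  moreover have "(\<Sum>i\<in>UNIV. (a$i - (P *v a)$i)^2) = a \<bullet> a - 2 * (a \<bullet> (P *v a)) + (P *v a) \<bullet> (P *v a)"
    by (simp add: inner_vec_def power2_diff sum.distrib sum_subtractf sum_distrib_left power2_eq_square algebra_simps)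
  moreover have "0 \<le> (\<Sum>i\<in>UNIV. (b$i - (P *v a)$i)^2)" by (simp add: sum_nonneg)
  ultimately show ?thesis using key_quad[OF assms, of a] by linarith
qed



lemma tangent_powr:
  fixes q c w :: real
  assumes "q \<ge> 1" "c > 0" "w \<ge> 0"
  shows "w powr q \<ge> c powr q + q * c powr (q - 1) * (w - c)"
proof (cases "w = 0")
  case True
  have "c powr q = c * c powr (q - 1)" using assms by (simp add: powr_diff)
  moreover have "c powr (q-1) \<ge> 0" by simp
  ultimately show ?thesis using True assms
    by (simp add: algebra_simps)
next
  case False
  then have w: "w > 0" using assms by auto
  have d: "((\<lambda>x. x powr q) has_real_derivative q * c powr (q - 1)) (at c within {0<..})"
    using assms by (auto intro!: derivative_eq_intros)
  have "c powr q * 1 + q * c powr (q - 1) * (w - c) \<le> w powr q"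
    using convex_on_imp_above_tangent[of "{0<..}" "\<lambda>x. x powr q" c w "q * c powr (q - 1)"]
      powr_convex[OF assms(1)] assms w d
    by (auto simp: interior_open)
  then show ?thesis by simp
qed

lemma l2_lp:
  fixes x :: "real^'n" and p :: real
  assumes p: "p \<ge> 1"
  shows "(\<Sum>k\<in>UNIV. (x$k)^2) \<le> (1 / min 1 (real CARD('n) powr (2/p - 1))) * (lpnorm p x)^2"
proof -
  define s where "s = (\<Sum>k\<in>UNIV. \<bar>x$k\<bar> powr p)"
  have s0: "s \<ge> 0" unfolding s_def by (simp add: sum_nonneg)
  have L2: "(lpnorm p x)^2 = s powr (2/p)"
    unfolding lpnorm_def s_def[symmetric] using s0
    by (simp add: powr_powr[symmetric] powr_realpow[symmetric] power2_eq_square powr_add[symmetric] del: powr_powr)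
  have n1: "real CARD('n) \<ge> 1" by (simp add: Suc_le_eq)
  show ?thesis
  proof (cases "p \<le> 2")
    case True
    have "real CARD('n) powr (2/p - 1) \<ge> 1"
      using n1 True p by (intro ge_one_powr_ge_zero) (auto simp: field_simps)
    then have m: "min 1 (real CARD('n) powr (2/p - 1)) = 1" by simp
    show ?thesis
    proof (cases "s = 0")
      case True
      then have "\<bar>x$k\<bar> powr p = 0" for k
        unfolding s_def by (subst (asm) sum_nonneg_eq_0_iff) auto
      then have "x$k = 0" for k by simp
      then show ?thesis by simp
    next
      case False
      then have sp: "s > 0" using s0 by simp
      define L where "L = s powr (1/p)"
      have Lp: "L > 0" unfolding L_def using sp by simp
      have LpP: "L powr p = s" unfolding L_def using sp p by (simp add: powr_powr)
      define y where "y k = \<bar>x$k\<bar> / L" for k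
      have y0: "y k \<ge> 0" for k unfolding y_def using Lp by simp
      have ypow: "y k powr p = \<bar>x$k\<bar> powr p / s" for k
        unfolding y_def using Lp LpP by (simp add: powr_divide)
      have ysum: "(\<Sum>k\<in>UNIV. y k powr p) = 1"
        unfolding ypow using sp by (simp add: sum_divide_distrib[symmetric] s_def)
      have yle: "y k powr p \<le> 1" for k
        using ysum member_le_sum[of k UNIV "\<lambda>k. y k powr p"] by simp
      have y1: "y k \<le> 1" for k
      proof (rule ccontr)
        assume "\<not> y k \<le> 1"
        then have "1 powr p < y k powr p" using p by (intro powr_less_mono2) auto
        then have "y k powr p > 1" by simp
        then show False using yle[of k] by simp
      qed
      have y2: "(y k)^2 \<le> y k powr p" for k
      proof (cases "y k = 0")
        case True then show ?thesis using p by simp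
      next
        case False
        then have "y k > 0" using y0 by (simp add: order_le_neq_trans)
        then have "y k powr 2 \<le> y k powr p" using y1[of k] True
          by (intro powr_mono') auto
        then show ?thesis using \<open>y k > 0\<close> by (simp add: powr_realpow)
      qed
      have "(\<Sum>k\<in>UNIV. (y k)^2) \<le> 1"
        using sum_mono[of UNIV "\<lambda>k. (y k)^2" "\<lambda>k. y k powr p", OF y2] ysum by simp
      moreover have "(\<Sum>k\<in>UNIV. (y k)^2) = (\<Sum>k\<in>UNIV. (x$k)^2) / L^2"
        unfolding y_def by (simp add: power_divide sum_divide_distrib)
      ultimately have "(\<Sum>k\<in>UNIV. (x$k)^2) \<le> L^2" using Lp by (simp add: divide_le_eq)
      moreover have "L^2 = s powr (2/p)" unfolding L_def using sp
        by (simp add: powr_realpow[symmetric] powr_powr)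
      ultimately show ?thesis using m L2 by simp
    qed
  next
    case False
    then have p2: "p > 2" by simp
    define n where "n = real CARD('n)"
    have np: "n > 0" using n1 n_def by simp
    have "2/p - 1 \<le> 0" using p2 by (simp add: field_simps)
    then have "n powr (2/p - 1) \<le> n powr 0"
      using n1 unfolding n_def by (intro powr_mono) auto
    then have "n powr (2/p - 1) \<le> 1" using np by simp
    then have m: "min 1 (real CARD('n) powr (2/p - 1)) = n powr (2/p - 1)" unfolding n_def by simp
    define q where "q = p / 2"
    have q1: "q \<ge> 1" using p2 q_def by simp
    define W where "W = (\<Sum>k\<in>UNIV. (x$k)^2)"
    have W0: "W \<ge> 0" unfolding W_def by (simp add: sum_nonneg)
    have mp: "n powr (2/p - 1) > 0" using np by simp
    have wq: "((x$k)^2) powr q = \<bar>x$k\<bar> powr p" for k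
    proof -
      have "((x$k)^2) = \<bar>x$k\<bar> powr 2"
        by (cases "x$k = 0") (auto simp: powr_realpow)
      then have "((x$k)^2) powr q = (\<bar>x$k\<bar> powr 2) powr q" by simp
      also have "\<dots> = \<bar>x$k\<bar> powr (2 * q)" by (rule powr_powr)
      also have "2 * q = p" using q_def by simp
      finally show ?thesis .
    qed
    show ?thesis
    proof (cases "W = 0")
      case True
      then show ?thesis using L2 s0 mp m W_def by simp
    next
      case False
      then have Wp: "W > 0" using W0 by simp
      define c where "c = W / n"
      have cp: "c > 0" unfolding c_def using Wp np by simp
      have "s = (\<Sum>k\<in>UNIV. ((x$k)^2) powr q)" unfolding s_def wq ..
      also have "\<dots> \<ge> (\<Sum>k\<in>UNIV. c powr q + q * c powr (q - 1) * ((x$k)^2 - c))"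
        by (intro sum_mono tangent_powr q1 cp) simp
      also have "(\<Sum>k\<in>UNIV. c powr q + q * c powr (q - 1) * ((x$k)^2 - c)) = n * c powr q + q * c powr (q - 1) * (W - n * c)"
        unfolding W_def n_def by (simp add: sum.distrib sum_distrib_left[symmetric] sum_subtractf)
      also have "W - n * c = 0" unfolding c_def using np by simp
      finally have sc: "s \<ge> n * c powr q" by simp
      have "n powr (2/p) * c = (n * c powr q) powr (2/p)"
        using np cp p2 q_def by (simp add: powr_mult powr_powr)
      also have "\<dots> \<le> s powr (2/p)" using sc np cp p2 by (intro powr_mono2) auto
      finally have "n powr (2/p) * c \<le> s powr (2/p)" .
      moreover have "n powr (2/p) * c = n powr (2/p - 1) * W"
        unfolding c_def using np by (simp add: powr_diff)
      ultimately have "W \<le> s powr (2/p) / n powr (2/p - 1)" using mp by (simp add: field_simps)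
      then show ?thesis using m L2 W_def by simp
    qed
  qed
qed



lemma mat1_sum:
  "(\<Sum>l\<in>UNIV. c * (mat 1::real^'n^'n)$k$l * f l) = c * f k"
proof -
  have "(\<Sum>l\<in>UNIV. c * (mat 1::real^'n^'n)$k$l * f l) = (\<Sum>l\<in>UNIV. if k = l then c * f l else 0)"
    by (intro sum.cong refl) (simp add: mat_def)
  then show ?thesis by simp
qed

lemma kron_comp:
  fixes P :: "real^'m^'m" and u :: "'m \<Rightarrow> real^'n"
  shows "(kron (mat 1 - P) (mat 1 :: real^'n^'n) *v stack u) $ (i,k)
     = u i $ k - (P *v (\<chi> j. u j $ k)) $ i"
proof -
  have "(kron (mat 1 - P) (mat 1 :: real^'n^'n) *v stack u) $ (i,k)
      = (\<Sum>r\<in>UNIV \<times> UNIV. ((mat 1 - P)$i$(fst r) * (mat 1 :: real^'n^'n)$k$(snd r)) * u (fst r) $ (snd r))"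
    by (simp add: matrix_vector_mult_def kron_def stack_def UNIV_Times_UNIV)
  also have "\<dots> = (\<Sum>j\<in>UNIV. \<Sum>l\<in>UNIV. ((mat 1 - P)$i$j * (mat 1 :: real^'n^'n)$k$l) * u j $ l)"
    by (subst sum.cartesian_product) (simp add: case_prod_beta)
  also have "\<dots> = (\<Sum>j\<in>UNIV. (mat 1 - P)$i$j * u j $ k)"
    by (simp only: mat1_sum)
  also have "\<dots> = (\<Sum>j\<in>UNIV. (if i = j then 1 else 0) * u j $ k) - (\<Sum>j\<in>UNIV. P$i$j * u j $ k)"
    by (simp add: mat_def left_diff_distrib sum_subtractf)
  also have "(\<Sum>j\<in>UNIV. (if i = j then 1 else 0) * u j $ k) = (\<Sum>j\<in>UNIV. if i = j then u j $ k else 0)"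
    by (intro sum.cong refl) simp
  also have "\<dots> = u i $ k" by simp
  also have "(\<Sum>j\<in>UNIV. P$i$j * u j $ k) = (P *v (\<chi> j. u j $ k)) $ i"
    by (simp add: matrix_vector_mult_def)
  finally show ?thesis .
qed

theorem lemma3:
  fixes P :: "real^'m^'m" and X :: "(real^'n) set" and p :: real
    and u v :: "'m \<Rightarrow> real^'n"
  assumes "transpose P = P" and "stochastic P" and "psd P"
    and "closed X" and "convex X" and "p \<ge> 1"
    and "\<forall>i. u i \<in> X" and "\<forall>i. v i \<in> X"
  shows "(norm (kron (mat 1 - P) (mat 1 :: real^'n^'n) *v stack u))\<^sup>2
     \<le> (1 / min 1 (real CARD('n) powr (2/p - 1)))
        * (\<Sum>i\<in>UNIV. \<Sum>j\<in>UNIV. P$i$j * (lpnorm p (v i - u j))\<^sup>2)"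
proof -
  define C where "C = 1 / min 1 (real CARD('n) powr (2/p - 1))"
  define a where "a k = (\<chi> j. u j $ k)" for k
  define b where "b k = (\<chi> j. v j $ k)" for k
  have nn: "P$i$j \<ge> 0" for i j using assms(2) unfolding stochastic_def by auto
  let ?w = "kron (mat 1 - P) (mat 1 :: real^'n^'n) *v stack u"
  have "(norm ?w)\<^sup>2 = ?w \<bullet> ?w" by (rule power2_norm_eq_inner)
  also have "\<dots> = (\<Sum>r\<in>UNIV. (?w $ r)^2)"
    by (simp add: inner_vec_def power2_eq_square)
  also have "\<dots> = (\<Sum>i\<in>UNIV. \<Sum>k\<in>UNIV. (u i $ k - (P *v a k) $ i)^2)"
  proof -
    have "(\<Sum>r\<in>UNIV. (?w $ r)^2) = (\<Sum>r\<in>UNIV\<times>UNIV. (?w $ r)^2)" by simp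
    also have "\<dots> = (\<Sum>i\<in>UNIV. \<Sum>k\<in>UNIV. (?w $ (i,k))^2)" using sum.cartesian_product[of "\<lambda>i k. (?w $ (i,k))^2" UNIV UNIV] by (simp add: case_prod_beta)
    finally show ?thesis by (simp add: kron_comp a_def)
  qed
  also have "\<dots> = (\<Sum>k\<in>UNIV. \<Sum>i\<in>UNIV. (a k $ i - (P *v a k) $ i)^2)"
    by (subst sum.swap) (simp add: a_def)
  also have "\<dots> \<le> (\<Sum>k\<in>UNIV. \<Sum>i\<in>UNIV. \<Sum>j\<in>UNIV. P$i$j * (b k $ i - a k $ j)^2)"
    by (intro sum_mono scalar_ineq assms(1-3))
  also have "\<dots> = (\<Sum>i\<in>UNIV. \<Sum>j\<in>UNIV. P$i$j * (\<Sum>k\<in>UNIV. ((v i - u j) $ k)^2))"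
  proof -
    have "(\<Sum>k\<in>UNIV. \<Sum>i\<in>UNIV. \<Sum>j\<in>UNIV. P$i$j * (b k $ i - a k $ j)^2)
        = (\<Sum>i\<in>UNIV. \<Sum>k\<in>UNIV. \<Sum>j\<in>UNIV. P$i$j * (b k $ i - a k $ j)^2)" by (rule sum.swap)
    also have "\<dots> = (\<Sum>i\<in>UNIV. \<Sum>j\<in>UNIV. \<Sum>k\<in>UNIV. P$i$j * (b k $ i - a k $ j)^2)"
      by (intro sum.cong refl) (rule sum.swap)
    also have "\<dots> = (\<Sum>i\<in>UNIV. \<Sum>j\<in>UNIV. P$i$j * (\<Sum>k\<in>UNIV. ((v i - u j) $ k)^2))"
      by (simp add: a_def b_def sum_distrib_left)
    finally show ?thesis .
  qed
  also have "\<dots> \<le> (\<Sum>i\<in>UNIV. \<Sum>j\<in>UNIV. P$i$j * (C * (lpnorm p (v i - u j))\<^sup>2))"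
    unfolding C_def by (intro sum_mono mult_left_mono l2_lp assms(6) nn)
  also have "\<dots> = C * (\<Sum>i\<in>UNIV. \<Sum>j\<in>UNIV. P$i$j * (lpnorm p (v i - u j))\<^sup>2)"
    by (simp add: sum_distrib_left algebra_simps)
  finally show ?thesis unfolding C_def .
qed

end
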